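(* If $\mathcal{X}=[0,1]$ with its usual topology (and Borel $\sigma$-algebra), then $\mathrm{FMV}=\mathrm{FS}$.
   Context: $\mathrm{FS}$: the set of processes $\mathbb{X}=(X_t)_{t\ge1}$ in $\mathcal{X}$ taking finitely many distinct values a.s. $\mathrm{FMV}$: the set of processes $\mathbb{X}$ such that for every countable partition $\{A_k\}_{k\ge1}$ of $\mathcal{X}$ into Borel sets, a.s. only finitely many $A_k$ contain some $X_t$. *)

theory Defs
  imports "HOL-Probability.Probability"
begin

definition process_in :: "'b measure \<Rightarrow> 'a measure \<Rightarrow> (nat \<Rightarrow> 'a \<Rightarrow> 'b) \<Rightarrow> bool" where
  "process_in N M X \<longleftrightarrow> (\<forall>t\<ge>1. X t \<in> measurable M N)"

definition FS :: "'a measure \<Rightarrow> (nat \<Rightarrow> 'a \<Rightarrow> 'b) \<Rightarrow> bool" where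
  "FS M X \<longleftrightarrow> (AE \<omega> in M. finite ((\<lambda>t. X t \<omega>) ` {1..}))"

text \<open>FMV: for every countable partition (A_k) of the value space into measurable sets,
almost surely only finitely many A_k contain some X_t. Finite partitions are covered
by allowing empty parts.\<close>
definition FMV :: "'b measure \<Rightarrow> 'a measure \<Rightarrow> (nat \<Rightarrow> 'a \<Rightarrow> 'b) \<Rightarrow> bool" where
  "FMV N M X \<longleftrightarrow>
     (\<forall>A :: nat \<Rightarrow> 'b set. (\<forall>k. A k \<in> sets N) \<and> disjoint_family A \<and> (\<Union>k. A k) = space N \<longrightarrow>
        (AE \<omega> in M. finite {k. \<exists>t\<ge>1. X t \<omega> \<in> A k}))"

end

theory Submission
  imports Defs
begin


lemma pred_real_eq[measurable]:
  fixes f g :: "'a \<Rightarrow> real"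
  assumes "f \<in> borel_measurable M" "g \<in> borel_measurable M"
  shows "Measurable.pred M (\<lambda>x. f x = g x)"
  unfolding pred_def using measurable_equality_set[OF assms] .

definition cell :: "nat \<Rightarrow> real \<Rightarrow> int" where "cell m x = \<lfloor>2^m * x\<rfloor>"
definition Ccell :: "nat \<Rightarrow> int \<Rightarrow> real set" where "Ccell m i = {x. cell m x = i}"
definition Idx :: "nat \<Rightarrow> int set" where "Idx m = {0..2^m}"

lemma cell_meas[measurable]: "cell m \<in> measurable borel (count_space UNIV)"
  unfolding cell_def by measurable

lemma Ccell_borel[measurable]: "Ccell m i \<in> sets borel"
  unfolding Ccell_def by measurable

lemma cell_Idx: "0 \<le> x \<Longrightarrow> x \<le> 1 \<Longrightarrow> cell m x \<in> Idx m"
proof -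
  assume a: "0 \<le> x" "x \<le> 1"
  have "0 \<le> 2^m * x" using a by simp
  moreover have "2^m * x \<le> 2^m" using a by simp
  moreover have "2^m * x < 2^m + 1" using \<open>2^m * x \<le> 2^m\<close> by linarith
  ultimately have "0 \<le> \<lfloor>2^m * x\<rfloor>" "\<lfloor>2^m * x\<rfloor> \<le> 2^m"
    by (simp, simp only: floor_le_iff, simp)
  then show ?thesis unfolding cell_def Idx_def by simp
qed

lemma cell_Suc: "cell m x = cell (Suc m) x div 2"
proof -
  have "cell m x = \<lfloor>(2^Suc m * x) / real_of_int 2\<rfloor>" unfolding cell_def by simp
  also have "\<dots> = cell (Suc m) x div 2" unfolding cell_def by (subst floor_divide_real_eq_div) auto
  finally show ?thesis .
qed

lemma cell_sep: "x < y \<Longrightarrow> \<exists>m0. \<forall>m\<ge>m0. cell m x \<noteq> cell m y"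
proof -
  assume xy: "x < y"
  obtain m0 where m0: "(1/2::real) ^ m0 < y - x" using real_arch_pow_inv[of "y - x" "1/2"] xy by auto
  show ?thesis
  proof (intro exI allI impI)
    fix m assume "m0 \<le> m"
    then have "(1/2::real)^m \<le> (1/2)^m0" by (intro power_decreasing) auto
    with m0 have "1 / 2^m < y - x" by (simp add: power_divide)
    then have "1 < 2^m * (y - x)" by (simp add: field_simps)
    then have "2^m * x + 1 < 2^m * y" by (simp add: algebra_simps)
    then have "\<lfloor>2^m * x + 1\<rfloor> \<le> \<lfloor>2^m * y\<rfloor>"
      by (intro floor_mono) simp
    then have "\<lfloor>2^m * x\<rfloor> + 1 \<le> \<lfloor>2^m * y\<rfloor>" by simp
    then show "cell m x \<noteq> cell m y" unfolding cell_def by simp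
  qed
qed

lemma cell_inj_eventually:
  assumes "finite F"
  shows "\<exists>m0. \<forall>m\<ge>m0. inj_on (cell m) F"
proof -
  define P where "P = {(x,y). x \<in> F \<and> y \<in> F \<and> x < y}"
  have fP: "finite P" using assms unfolding P_def
    by (intro finite_subset[OF _ finite_cartesian_product[OF assms assms]]) auto
  have "\<forall>q\<in>P. \<exists>m0. \<forall>m\<ge>m0. cell m (fst q) \<noteq> cell m (snd q)"
    using cell_sep unfolding P_def by auto
  then obtain g where g: "\<And>q. q \<in> P \<Longrightarrow> \<forall>m\<ge>g q. cell m (fst q) \<noteq> cell m (snd q)" by metis
  define m0 where "m0 = Max (insert 0 (g ` P))"
  show ?thesis
  proof (intro exI allI impI inj_onI)
    fix m x y assume m: "m0 \<le> m" and x: "x \<in> F" and y: "y \<in> F" and eq: "cell m x = cell m y"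
    show "x = y"
    proof (rule ccontr)
      assume "x \<noteq> y"
      then have "(x,y) \<in> P \<or> (y,x) \<in> P" using x y unfolding P_def by auto
      then show False
      proof
        assume q: "(x,y) \<in> P"
        have "g (x,y) \<le> m0" unfolding m0_def using fP q by (intro Max_ge) auto
        then have "g (x,y) \<le> m" using m by simp
        then have "cell m x \<noteq> cell m y" using g[OF q] by simp
        with eq show False by simp
      next
        assume q: "(y,x) \<in> P"
        have "g (y,x) \<le> m0" unfolding m0_def using fP q by (intro Max_ge) auto
        then have "g (y,x) \<le> m" using m by simp
        then have "cell m y \<noteq> cell m x" using g[OF q] by simp
        with eq show False by simp
      qed
    qed
  qed
qed

locale proc = prob_space M for M :: "'a measure" +
  fixes Y :: "nat \<Rightarrow> 'a \<Rightarrow> real"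
  assumes Ymeas[measurable]: "\<And>t. Y t \<in> borel_measurable M"
    and Yrng: "\<And>t \<omega>. \<omega> \<in> space M \<Longrightarrow> 0 \<le> Y t \<omega> \<and> Y t \<omega> \<le> 1"
begin

definition vals where "vals \<omega> = range (\<lambda>t. Y t \<omega>)"
definition hit where "hit S \<omega> \<longleftrightarrow> (\<exists>t. Y t \<omega> \<in> S)"
definition infin where "infin S \<omega> \<longleftrightarrow> infinite (vals \<omega> \<inter> S)"

lemma finite_char: "finite (vals \<omega> \<inter> S) \<longleftrightarrow> (\<exists>N. \<forall>t. Y t \<omega> \<in> S \<longrightarrow> (\<exists>s\<in>{..N}. Y t \<omega> = Y s \<omega>))"
proof
  assume fin: "finite (vals \<omega> \<inter> S)"
  have "\<forall>v \<in> vals \<omega> \<inter> S. \<exists>t. Y t \<omega> = v" by (auto simp: vals_def)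
  then obtain T where T: "\<And>v. v \<in> vals \<omega> \<inter> S \<Longrightarrow> Y (T v) \<omega> = v" by metis
  define N where "N = Max (T ` (vals \<omega> \<inter> S))"
  show "\<exists>N. \<forall>t. Y t \<omega> \<in> S \<longrightarrow> (\<exists>s\<in>{..N}. Y t \<omega> = Y s \<omega>)"
  proof (intro exI allI impI)
    fix t assume "Y t \<omega> \<in> S"
    then have v: "Y t \<omega> \<in> vals \<omega> \<inter> S" by (auto simp: vals_def)
    then have "T (Y t \<omega>) \<le> N" unfolding N_def using fin by (intro Max_ge) auto
    then show "\<exists>s\<in>{..N}. Y t \<omega> = Y s \<omega>" using T[OF v] by (intro bexI[of _ "T (Y t \<omega>)"]) auto
  qed
next
  assume "\<exists>N. \<forall>t. Y t \<omega> \<in> S \<longrightarrow> (\<exists>s\<in>{..N}. Y t \<omega> = Y s \<omega>)"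
  then obtain N where N: "\<And>t. Y t \<omega> \<in> S \<Longrightarrow> \<exists>s\<in>{..N}. Y t \<omega> = Y s \<omega>" by blast
  have "vals \<omega> \<inter> S \<subseteq> (\<lambda>s. Y s \<omega>) ` {..N}" using N by (auto simp: vals_def)
  then show "finite (vals \<omega> \<inter> S)" by (rule finite_subset) auto
qed

lemma pred_hit[measurable]: assumes [measurable]: "S \<in> sets borel" shows "Measurable.pred M (hit S)"
  unfolding hit_def by measurable

lemma pred_infin[measurable]: assumes [measurable]: "S \<in> sets borel" shows "Measurable.pred M (infin S)"
  unfolding infin_def finite_char by measurable

end



lemma finite_Idx[simp]: "finite (Idx m)" by (simp add: Idx_def)

context proc begin

definition cnt where "cnt R m \<omega> = card {i\<in>Idx m. hit (R \<inter> Ccell m i) \<omega>}"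

lemma cnt_sum: "real (cnt R m \<omega>) = (\<Sum>i\<in>Idx m. if hit (R \<inter> Ccell m i) \<omega> then 1 else 0)"
  unfolding cnt_def using sum.inter_filter[of "Idx m" "\<lambda>_. 1::real" "\<lambda>i. hit (R \<inter> Ccell m i) \<omega>"] by simp

lemma pred_cnt[measurable]:
  assumes [measurable]: "R \<in> sets borel"
  shows "Measurable.pred M (\<lambda>\<omega>. K < cnt R m \<omega>)"
proof -
  have "(\<lambda>\<omega>. K < cnt R m \<omega>) = (\<lambda>\<omega>. real K < (\<Sum>i\<in>Idx m. if hit (R \<inter> Ccell m i) \<omega> then 1 else 0))"
    by (subst cnt_sum[symmetric]) simp
  also have "Measurable.pred M \<dots>" by measurable
  finally show ?thesis .
qed

lemma cnt_mono:
  assumes "\<omega> \<in> space M" shows "cnt R m \<omega> \<le> cnt R (Suc m) \<omega>"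
proof -
  have "{i\<in>Idx m. hit (R \<inter> Ccell m i) \<omega>} \<subseteq> (\<lambda>j. j div 2) ` {j\<in>Idx (Suc m). hit (R \<inter> Ccell (Suc m) j) \<omega>}"
  proof
    fix i assume "i \<in> {i\<in>Idx m. hit (R \<inter> Ccell m i) \<omega>}"
    then obtain t where t: "Y t \<omega> \<in> R" "cell m (Y t \<omega>) = i" by (auto simp: hit_def Ccell_def)
    let ?j = "cell (Suc m) (Y t \<omega>)"
    have "?j \<in> Idx (Suc m)" using Yrng[OF assms] cell_Idx by blast
    moreover have "hit (R \<inter> Ccell (Suc m) ?j) \<omega>" using t by (auto simp: hit_def Ccell_def)
    moreover have "i = ?j div 2" using t cell_Suc by metis
    ultimately show "i \<in> (\<lambda>j. j div 2) ` {j\<in>Idx (Suc m). hit (R \<inter> Ccell (Suc m) j) \<omega>}" by blast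
  qed
  then have "cnt R m \<omega> \<le> card ((\<lambda>j. j div 2) ` {j\<in>Idx (Suc m). hit (R \<inter> Ccell (Suc m) j) \<omega>})"
    unfolding cnt_def by (intro card_mono) auto
  also have "\<dots> \<le> cnt R (Suc m) \<omega>" unfolding cnt_def by (rule card_image_le) auto
  finally show ?thesis .
qed

lemma cnt_mono':
  assumes "\<omega> \<in> space M" "m \<le> m'" shows "cnt R m \<omega> \<le> cnt R m' \<omega>"
  using lift_Suc_mono_le[of "\<lambda>m. cnt R m \<omega>", OF cnt_mono[OF assms(1)] assms(2)] .

lemma cnt_large:
  assumes "\<omega> \<in> space M" "infin R \<omega>" shows "\<exists>m. K < cnt R m \<omega>"
proof -
  obtain F where F: "F \<subseteq> vals \<omega> \<inter> R" "finite F" "card F = Suc K"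
    using assms(2) infinite_arbitrarily_large unfolding infin_def by blast
  obtain m0 where "\<forall>m\<ge>m0. inj_on (cell m) F" using cell_inj_eventually[OF F(2)] by blast
  then have inj: "inj_on (cell m0) F" by simp
  have "cell m0 ` F \<subseteq> {i\<in>Idx m0. hit (R \<inter> Ccell m0 i) \<omega>}"
  proof
    fix i assume "i \<in> cell m0 ` F"
    then obtain x where x: "x\<in>F" "i = cell m0 x" by blast
    then obtain t where "x = Y t \<omega>" "x \<in> R" using F(1) by (auto simp: vals_def)
    then show "i \<in> {i\<in>Idx m0. hit (R \<inter> Ccell m0 i) \<omega>}"
      using x Yrng[OF assms(1)] cell_Idx by (auto simp: hit_def Ccell_def)
  qed
  then have "card (cell m0 ` F) \<le> cnt R m0 \<omega>" unfolding cnt_def by (intro card_mono) auto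
  moreover have "card (cell m0 ` F) = Suc K" using card_image[OF inj] F(3) by simp
  ultimately show ?thesis by (intro exI[of _ m0]) simp
qed

lemma heavy:
  assumes "\<omega> \<in> space M" "infin R \<omega>" shows "\<exists>h\<in>Idx m. infin (R \<inter> Ccell m h) \<omega>"
proof (rule ccontr)
  assume "\<not> ?thesis"
  then have fin: "\<forall>h\<in>Idx m. finite (vals \<omega> \<inter> (R \<inter> Ccell m h))" unfolding infin_def by blast
  have "vals \<omega> \<inter> R \<subseteq> (\<Union>h\<in>Idx m. vals \<omega> \<inter> (R \<inter> Ccell m h))"
    using Yrng[OF assms(1)] cell_Idx by (auto simp: vals_def Ccell_def)
  moreover have "finite (\<Union>h\<in>Idx m. vals \<omega> \<inter> (R \<inter> Ccell m h))" using fin by (intro finite_UN_I) auto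
  ultimately have "finite (vals \<omega> \<inter> R)" by (rule finite_subset)
  with assms(2) show False unfolding infin_def by blast
qed

end



context proc begin

lemma step:
  assumes R[measurable]: "R \<in> sets borel" and \<Gamma>: "\<Gamma> \<in> sets M"
    and inf: "\<And>\<omega>. \<omega> \<in> \<Gamma> \<Longrightarrow> infin R \<omega>" and \<epsilon>: "0 < \<epsilon>"
  shows "\<exists>G\<in>sets borel. G \<subseteq> R \<and> measure M (\<Gamma> - {\<omega>\<in>space M. hit G \<omega> \<and> infin (R - G) \<omega>}) \<le> \<epsilon>"
proof (cases "1 \<le> \<epsilon>")
  case True
  have "measure M (\<Gamma> - {\<omega>\<in>space M. hit {} \<omega> \<and> infin (R - {}) \<omega>}) \<le> 1" by (rule prob_le_1)
  then have "measure M (\<Gamma> - {\<omega>\<in>space M. hit {} \<omega> \<and> infin (R - {}) \<omega>}) \<le> \<epsilon>" using True by linarith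
  then show ?thesis by (intro bexI[of _ "{}"]) auto
next
  case False
  define p where "p = \<epsilon>/2"
  have p: "0 < p" "p \<le> 1" using \<epsilon> False unfolding p_def by auto
  obtain K where K: "(1-p)^K < \<epsilon>/4" using real_arch_pow_inv[of "\<epsilon>/4" "1-p"] p \<epsilon> by auto
  define E where "E m = {\<omega>\<in>\<Gamma>. K < cnt R m \<omega>}" for m
  have \<Gamma>sp: "\<Gamma> \<subseteq> space M" using sets.sets_into_space[OF \<Gamma>] .
  have E_sets: "E m \<in> sets M" for m
  proof -
    have "E m = \<Gamma> \<inter> {\<omega>\<in>space M. K < cnt R m \<omega>}" using \<Gamma>sp unfolding E_def by auto
    also have "\<dots> \<in> sets M" using \<Gamma> by measurable
    finally show ?thesis .
  qed
  have inc: "incseq E" unfolding incseq_def E_def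
  proof (intro allI impI subsetI)
    fix a b x assume ab: "a \<le> b" and x: "x \<in> {\<omega> \<in> \<Gamma>. K < cnt R a \<omega>}"
    then have "x \<in> space M" using \<Gamma>sp by auto
    then have "cnt R a x \<le> cnt R b x" using cnt_mono' ab by blast
    with x show "x \<in> {\<omega> \<in> \<Gamma>. K < cnt R b \<omega>}" by auto
  qed
  have UE: "(\<Union>m. E m) = \<Gamma>"
  proof
    show "(\<Union>m. E m) \<subseteq> \<Gamma>" unfolding E_def by auto
    show "\<Gamma> \<subseteq> (\<Union>m. E m)"
    proof
      fix \<omega> assume w: "\<omega> \<in> \<Gamma>"
      then have "\<omega> \<in> space M" using \<Gamma>sp by auto
      then obtain m where "K < cnt R m \<omega>" using cnt_large inf[OF w] by blast
      then show "\<omega> \<in> (\<Union>m. E m)" using w unfolding E_def by auto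
    qed
  qed
  have "(\<lambda>m. measure M (E m)) \<longlonglongrightarrow> measure M \<Gamma>"
    using finite_Lim_measure_incseq[of E] E_sets inc UE by auto
  then have "eventually (\<lambda>m. measure M \<Gamma> - \<epsilon>/4 < measure M (E m)) sequentially"
    by (rule order_tendstoD(1)) (use \<epsilon> in simp)
  then obtain m where m: "measure M \<Gamma> - \<epsilon>/4 < measure M (E m)"
    unfolding eventually_sequentially by blast
  have EmD: "measure M (\<Gamma> - E m) < \<epsilon>/4"
  proof -
    have "E m \<subseteq> \<Gamma>" unfolding E_def by auto
    then have "measure M (\<Gamma> - E m) = measure M \<Gamma> - measure M (E m)"
      using finite_measure_Diff[OF \<Gamma> E_sets] by simp
    with m show ?thesis by simp
  qed
  define I where "I = Idx m"
  have finI: "finite I" unfolding I_def by simp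
  define Q where "Q = Pi_pmf I False (\<lambda>_. bernoulli_pmf p)"
  define G where "G L = R \<inter> {x. L (cell m x)}" for L :: "int \<Rightarrow> bool"
  define Good where "Good L = {\<omega>\<in>space M. hit (G L) \<omega> \<and> infin (R - G L) \<omega>}" for L
  have G_sets[measurable]: "G L \<in> sets borel" for L
    unfolding G_def by measurable
  have Good_sets: "Good L \<in> sets M" for L
    unfolding Good_def by measurable
  define S where "S = set_pmf Q"
  have finS: "finite S"
  proof -
    have "S \<subseteq> PiE_dflt I False (set_pmf \<circ> (\<lambda>_. bernoulli_pmf p))"
      unfolding S_def Q_def by (rule set_Pi_pmf_subset'[OF finI])
    moreover have "finite (PiE_dflt I False (set_pmf \<circ> (\<lambda>_. bernoulli_pmf p)))"
      using finI by (intro finite_PiE_dflt) auto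
    ultimately show ?thesis by (rule finite_subset)
  qed
  have ptw: "measure_pmf.prob Q {L. \<omega> \<notin> Good L} \<le> p + (1-p)^K" if \<omega>E: "\<omega> \<in> E m" for \<omega>
  proof -
    have \<omega>\<Gamma>: "\<omega> \<in> \<Gamma>" and cntK: "K < cnt R m \<omega>" using \<omega>E unfolding E_def by auto
    have \<omega>sp: "\<omega> \<in> space M" using \<omega>\<Gamma> \<Gamma>sp by auto
    obtain h where h: "h \<in> I" "infin (R \<inter> Ccell m h) \<omega>"
      using heavy[OF \<omega>sp inf[OF \<omega>\<Gamma>]] unfolding I_def by blast
    define B where "B = {i\<in>I. hit (R \<inter> Ccell m i) \<omega>} - {h}"
    have BI: "B \<subseteq> I" unfolding B_def by auto
    have cardB: "K \<le> card B"
      using cntK finI unfolding B_def cnt_def I_def by (auto simp: card_Diff_singleton_if)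
    have sub: "{L. \<omega> \<notin> Good L} \<subseteq> {L. L h} \<union> {L. \<forall>b\<in>B. \<not> L b}"
    proof
      fix L assume L: "L \<in> {L. \<omega> \<notin> Good L}"
      show "L \<in> {L. L h} \<union> {L. \<forall>b\<in>B. \<not> L b}"
      proof (rule ccontr)
        assume "\<not> ?thesis"
        then have nh: "\<not> L h" and "\<exists>b\<in>B. L b" by auto
        then obtain b where b: "b \<in> B" "L b" by blast
        then obtain t where t: "Y t \<omega> \<in> R" "cell m (Y t \<omega>) = b"
          unfolding B_def by (auto simp: hit_def Ccell_def)
        have "hit (G L) \<omega>" using t b unfolding hit_def G_def by auto
        moreover have "vals \<omega> \<inter> (R \<inter> Ccell m h) \<subseteq> vals \<omega> \<inter> (R - G L)"
          using nh unfolding G_def Ccell_def by auto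
        then have "infin (R - G L) \<omega>" using infinite_super h(2) unfolding infin_def by blast
        ultimately have "\<omega> \<in> Good L" using \<omega>sp unfolding Good_def by auto
        with L show False by simp
      qed
    qed
    have P1: "measure_pmf.prob Q {L. L h} = p"
    proof -
      have "{L. L h} = Pi I (\<lambda>i. if i = h then {True} else UNIV)" using h(1) by (auto simp: Pi_def)
      then have "measure_pmf.prob Q {L. L h} =
          (\<Prod>i\<in>I. measure_pmf.prob (bernoulli_pmf p) (if i = h then {True} else UNIV))"
        unfolding Q_def using finI by (simp add: measure_Pi_pmf_Pi)
      also have "\<dots> = (\<Prod>i\<in>I. if i = h then p else 1)"
        using p by (intro prod.cong) (auto simp: measure_pmf_single)
      also have "\<dots> = p" using h(1) finI by simp
      finally show ?thesis .
    qed
    have P2: "measure_pmf.prob Q {L. \<forall>b\<in>B. \<not> L b} = (1-p) ^ card B"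
    proof -
      have "{L. \<forall>b\<in>B. \<not> L b} = Pi I (\<lambda>i. if i \<in> B then {False} else UNIV)" using BI by (auto simp: Pi_def)
      then have "measure_pmf.prob Q {L. \<forall>b\<in>B. \<not> L b} =
          (\<Prod>i\<in>I. measure_pmf.prob (bernoulli_pmf p) (if i \<in> B then {False} else UNIV))"
        unfolding Q_def using finI by (simp add: measure_Pi_pmf_Pi)
      also have "\<dots> = (\<Prod>i\<in>I. if i \<in> B then 1-p else 1)"
        using p by (intro prod.cong) (auto simp: measure_pmf_single)
      also have "\<dots> = (1-p) ^ card B" using BI finI by (simp add: prod.If_cases Int_absorb1)
      finally show ?thesis .
    qed
    have "measure_pmf.prob Q {L. \<omega> \<notin> Good L} \<le> measure_pmf.prob Q ({L. L h} \<union> {L. \<forall>b\<in>B. \<not> L b})"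
      using sub by (intro measure_pmf.finite_measure_mono) auto
    also have "\<dots> \<le> measure_pmf.prob Q {L. L h} + measure_pmf.prob Q {L. \<forall>b\<in>B. \<not> L b}"
      by (intro measure_Un_le) auto
    also have "\<dots> \<le> p + (1-p)^K" unfolding P1 P2 using p cardB by (intro add_left_mono power_decreasing) auto
    finally show ?thesis .
  qed
  define f where "f L = measure M (\<Gamma> - Good L)" for L
  define g where "g \<omega> = (\<Sum>L\<in>S. pmf Q L * indicator (\<Gamma> - Good L) \<omega>)" for \<omega>
  have g_eq: "g \<omega> = measure_pmf.prob Q {L. \<omega> \<in> \<Gamma> - Good L}" for \<omega>
  proof -
    have "measure_pmf.prob Q {L. \<omega> \<in> \<Gamma> - Good L} = measure_pmf.prob Q ({L. \<omega> \<in> \<Gamma> - Good L} \<inter> S)"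
      unfolding S_def by (rule measure_Int_set_pmf[symmetric])
    also have "\<dots> = sum (pmf Q) ({L. \<omega> \<in> \<Gamma> - Good L} \<inter> S)"
      using finS by (intro measure_measure_pmf_finite) auto
    also have "({L. \<omega> \<in> \<Gamma> - Good L} \<inter> S) = {L\<in>S. \<omega> \<in> \<Gamma> - Good L}" by auto
    also have "sum (pmf Q) \<dots> = (\<Sum>L\<in>S. if \<omega> \<in> \<Gamma> - Good L then pmf Q L else 0)"
      using finS by (rule sum.inter_filter)
    also have "\<dots> = g \<omega>" unfolding g_def by (intro sum.cong) (auto simp: indicator_def)
    finally show ?thesis by simp
  qed
  have int_ind: "integrable M (indicator (\<Gamma> - Good L) :: 'a \<Rightarrow> real)" for L
    using \<Gamma> Good_sets emeasure_finite by (intro integrable_real_indicator) (auto simp: less_top[symmetric])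
  have int_g: "integrable M g" unfolding g_def
    by (rule Bochner_Integration.integrable_sum[where f="\<lambda>L \<omega>. pmf Q L * indicator (\<Gamma> - Good L) \<omega>"]) (use int_ind in auto)
  have sum_eq: "(\<Sum>L\<in>S. pmf Q L * f L) = (\<integral>\<omega>. g \<omega> \<partial>M)"
  proof -
    have "(\<integral>\<omega>. g \<omega> \<partial>M) = (\<Sum>L\<in>S. \<integral>\<omega>. pmf Q L * indicator (\<Gamma> - Good L) \<omega> \<partial>M)"
      unfolding g_def
      by (rule Bochner_Integration.integral_sum[where f="\<lambda>L \<omega>. pmf Q L * indicator (\<Gamma> - Good L) \<omega>"]) (use int_ind in auto)
    also have "\<dots> = (\<Sum>L\<in>S. pmf Q L * f L)"
    proof (intro sum.cong refl)
      fix L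
      have "(\<integral>\<omega>. pmf Q L * indicator (\<Gamma> - Good L) \<omega> \<partial>M) = pmf Q L * (\<integral>\<omega>. indicator (\<Gamma> - Good L) \<omega> \<partial>M)"
        by (rule integral_mult_right_zero)
      also have "(\<integral>\<omega>. indicator (\<Gamma> - Good L) \<omega> \<partial>M) = f L"
        unfolding f_def integral_indicator using \<Gamma>sp by (simp add: Int_absorb2 Diff_subset[THEN order_trans])
      finally show "(\<integral>\<omega>. pmf Q L * indicator (\<Gamma> - Good L) \<omega> \<partial>M) = pmf Q L * f L" .
    qed
    finally show ?thesis by simp
  qed
  have g_le: "g \<omega> \<le> 3*\<epsilon>/4 + indicator (\<Gamma> - E m) \<omega>" if "\<omega> \<in> space M" for \<omega>
  proof (cases "\<omega> \<in> E m")
    case True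
    have "g \<omega> \<le> measure_pmf.prob Q {L. \<omega> \<notin> Good L}"
      unfolding g_eq by (intro measure_pmf.finite_measure_mono) auto
    also have "\<dots> \<le> p + (1-p)^K" by (rule ptw[OF True])
    also have "\<dots> \<le> 3*\<epsilon>/4" using K unfolding p_def by simp
    finally show ?thesis by (simp add: indicator_def)
  next
    case False
    show ?thesis
    proof (cases "\<omega> \<in> \<Gamma>")
      case True
      have "g \<omega> \<le> 1" unfolding g_eq by (rule measure_pmf.prob_le_1)
      then show ?thesis using True False \<epsilon> by (simp add: indicator_def)
    next
      case F2: False
      have "g \<omega> = 0" unfolding g_eq using F2 by simp
      then show ?thesis using \<epsilon> by (simp add: indicator_def)
    qed
  qed
  have "(\<integral>\<omega>. g \<omega> \<partial>M) \<le> (\<integral>\<omega>. 3*\<epsilon>/4 + indicator (\<Gamma> - E m) \<omega> \<partial>M)"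
    using g_le int_g \<Gamma> E_sets emeasure_finite by (intro integral_mono integrable_add integrable_real_indicator) (auto simp: less_top[symmetric])
  also have "\<dots> = 3*\<epsilon>/4 + measure M (\<Gamma> - E m)"
  proof -
    have "(\<integral>\<omega>. 3*\<epsilon>/4 + indicator (\<Gamma> - E m) \<omega> \<partial>M) = (\<integral>\<omega>. 3*\<epsilon>/4 \<partial>M) + (\<integral>\<omega>. indicator (\<Gamma> - E m) \<omega> \<partial>M)"
      using \<Gamma> E_sets emeasure_finite
      by (intro Bochner_Integration.integral_add integrable_real_indicator) (auto simp: less_top[symmetric])
    also have "(\<integral>\<omega>. 3*\<epsilon>/4 \<partial>M) = 3*\<epsilon>/4" by (simp add: prob_space)
    also have "(\<integral>\<omega>. indicator (\<Gamma> - E m) \<omega> \<partial>M) = measure M (\<Gamma> - E m)"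
      unfolding integral_indicator using \<Gamma>sp by (simp add: Int_absorb2 Diff_subset[THEN order_trans])
    finally show ?thesis .
  qed
  also have "\<dots> < \<epsilon>" using EmD by simp
  finally have avg: "(\<Sum>L\<in>S. pmf Q L * f L) < \<epsilon>" using sum_eq by simp
  have "\<exists>L\<in>S. f L < \<epsilon>"
  proof (rule ccontr)
    assume "\<not> ?thesis"
    then have "\<forall>L\<in>S. \<epsilon> \<le> f L" by auto
    then have "(\<Sum>L\<in>S. pmf Q L * \<epsilon>) \<le> (\<Sum>L\<in>S. pmf Q L * f L)"
      by (intro sum_mono mult_left_mono) auto
    moreover have "(\<Sum>L\<in>S. pmf Q L * \<epsilon>) = \<epsilon>"
      using sum_pmf_eq_1[OF finS] unfolding S_def by (simp add: sum_distrib_right[symmetric])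
    ultimately show False using avg by simp
  qed
  then obtain L where "f L < \<epsilon>" by blast
  then show ?thesis unfolding f_def Good_def using G_sets by (intro bexI[of _ "G L"]) (auto simp: G_def)
qed

end



context proc begin

definition stepG where
  "stepG R \<Gamma> \<epsilon> = (SOME G. G \<in> sets borel \<and> G \<subseteq> R \<and> measure M (\<Gamma> - {\<omega>\<in>space M. hit G \<omega> \<and> infin (R - G) \<omega>}) \<le> \<epsilon>)"

lemma stepG:
  assumes "R \<in> sets borel" "\<Gamma> \<in> sets M" "\<And>\<omega>. \<omega> \<in> \<Gamma> \<Longrightarrow> infin R \<omega>" "0 < \<epsilon>"
  shows "stepG R \<Gamma> \<epsilon> \<in> sets borel \<and> stepG R \<Gamma> \<epsilon> \<subseteq> R \<and>
    measure M (\<Gamma> - {\<omega>\<in>space M. hit (stepG R \<Gamma> \<epsilon>) \<omega> \<and> infin (R - stepG R \<Gamma> \<epsilon>) \<omega>}) \<le> \<epsilon>"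
  unfolding stepG_def using step[OF assms] by (rule someI2_bex) blast

fun seqRG :: "real \<Rightarrow> nat \<Rightarrow> real set \<times> 'a set" where
  "seqRG \<eta> 0 = (UNIV, {\<omega>\<in>space M. infin UNIV \<omega>})"
| "seqRG \<eta> (Suc j) = (let R = fst (seqRG \<eta> j); \<Gamma> = snd (seqRG \<eta> j); G = stepG R \<Gamma> (\<eta> / 2^(j+2))
     in (R - G, {\<omega>\<in>\<Gamma>. hit G \<omega> \<and> infin (R - G) \<omega>}))"

definition "Rs \<eta> j = fst (seqRG \<eta> j)"
definition "Gam \<eta> j = snd (seqRG \<eta> j)"
definition "Gs \<eta> j = stepG (Rs \<eta> j) (Gam \<eta> j) (\<eta> / 2^(j+2))"

lemma Rs_Suc: "Rs \<eta> (Suc j) = Rs \<eta> j - Gs \<eta> j"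
  unfolding Rs_def Gs_def Gam_def by (simp add: Let_def)

lemma Gam_Suc: "Gam \<eta> (Suc j) = {\<omega>\<in>Gam \<eta> j. hit (Gs \<eta> j) \<omega> \<and> infin (Rs \<eta> (Suc j)) \<omega>}"
  unfolding Rs_def Gs_def Gam_def by (simp add: Let_def)

lemma Rs0: "Rs \<eta> 0 = UNIV" unfolding Rs_def by simp
lemma Gam0: "Gam \<eta> 0 = {\<omega>\<in>space M. infin UNIV \<omega>}" unfolding Gam_def by simp

lemma inv:
  assumes "0 < \<eta>"
  shows "Rs \<eta> j \<in> sets borel \<and> Gam \<eta> j \<in> sets M \<and> (\<forall>\<omega>\<in>Gam \<eta> j. infin (Rs \<eta> j) \<omega>)"
proof (induction j)
  case 0
  have "Gam \<eta> 0 \<in> sets M" unfolding Gam0 by measurable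
  then show ?case unfolding Rs0 Gam0 by auto
next
  case (Suc j)
  have "0 < \<eta> / 2^(j+2)" using assms by simp
  then have G: "Gs \<eta> j \<in> sets borel" unfolding Gs_def using stepG Suc by blast
  have R: "Rs \<eta> (Suc j) \<in> sets borel" unfolding Rs_Suc using Suc G by auto
  have "Gam \<eta> (Suc j) = Gam \<eta> j \<inter> {\<omega>\<in>space M. hit (Gs \<eta> j) \<omega> \<and> infin (Rs \<eta> (Suc j)) \<omega>}"
    unfolding Gam_Suc using Suc sets.sets_into_space by auto
  also have "\<dots> \<in> sets M"
  proof (rule sets.Int)
    show "Gam \<eta> j \<in> sets M" using Suc by auto
    show "{\<omega> \<in> space M. hit (Gs \<eta> j) \<omega> \<and> infin (Rs \<eta> (Suc j)) \<omega>} \<in> sets M" using G R by measurable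
  qed
  finally show ?case using R unfolding Gam_Suc by auto
qed

lemma Gs_props:
  assumes "0 < \<eta>"
  shows "Gs \<eta> j \<in> sets borel" "Gs \<eta> j \<subseteq> Rs \<eta> j"
    "measure M (Gam \<eta> j) - measure M (Gam \<eta> (Suc j)) \<le> \<eta> / 2^(j+2)"
proof -
  have pos: "0 < \<eta> / 2^(j+2)" using assms by simp
  note I = inv[OF assms, of j]
  note S = stepG[OF conjunct1[OF I] conjunct1[OF conjunct2[OF I]] _ pos, folded Gs_def]
  show "Gs \<eta> j \<in> sets borel" "Gs \<eta> j \<subseteq> Rs \<eta> j" using S I by auto
  have sub: "Gam \<eta> (Suc j) \<subseteq> Gam \<eta> j" unfolding Gam_Suc by auto
  have sp: "Gam \<eta> j \<subseteq> space M" using I sets.sets_into_space by auto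
  have eq: "Gam \<eta> j - Gam \<eta> (Suc j) = Gam \<eta> j - {\<omega>\<in>space M. hit (Gs \<eta> j) \<omega> \<and> infin (Rs \<eta> j - Gs \<eta> j) \<omega>}"
    unfolding Gam_Suc Rs_Suc using sp by auto
  have "measure M (Gam \<eta> j) - measure M (Gam \<eta> (Suc j)) = measure M (Gam \<eta> j - Gam \<eta> (Suc j))"
    using finite_measure_Diff[OF _ _ sub] I inv[OF assms, of "Suc j"] by simp
  also have "\<dots> \<le> \<eta> / 2^(j+2)" unfolding eq using S I by auto
  finally show "measure M (Gam \<eta> j) - measure M (Gam \<eta> (Suc j)) \<le> \<eta> / 2^(j+2)" .
qed

lemma Gam_measure:
  assumes "0 < \<eta>" "measure M (Gam \<eta> 0) = \<eta>"
  shows "\<eta>/2 + \<eta>/2^(j+1) \<le> measure M (Gam \<eta> j)"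
proof (induction j)
  case 0
  then show ?case using assms by simp
next
  case (Suc j)
  have "\<eta>/2 + \<eta>/2^(Suc j+1) = \<eta>/2 + \<eta>/2^(j+1) - \<eta>/2^(j+2)" by (simp add: field_simps)
  also have "\<dots> \<le> measure M (Gam \<eta> (Suc j))" using Suc Gs_props(3)[OF assms(1), of j] by linarith
  finally show ?case .
qed

lemma Rs_anti: "i \<le> j \<Longrightarrow> Rs \<eta> j \<subseteq> Rs \<eta> i"
  by (induction j rule: dec_induct) (auto simp: Rs_Suc)

lemma Gam_anti: "decseq (Gam \<eta>)"
  unfolding decseq_Suc_iff by (auto simp: Gam_Suc)

lemma Gs_disj:
  assumes "0 < \<eta>" "i < j" shows "Gs \<eta> i \<inter> Gs \<eta> j = {}"
proof -
  have "Gs \<eta> j \<subseteq> Rs \<eta> j" using Gs_props(2)[OF assms(1)] .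
  also have "\<dots> \<subseteq> Rs \<eta> (Suc i)" using assms(2) by (intro Rs_anti) simp
  also have "\<dots> = Rs \<eta> i - Gs \<eta> i" by (rule Rs_Suc)
  finally show ?thesis by auto
qed

lemma hard:
  assumes FMV: "\<And>A::nat \<Rightarrow> real set. (\<forall>k. A k \<in> sets (restrict_space borel {0..1})) \<Longrightarrow> disjoint_family A \<Longrightarrow>
      (\<Union>k. A k) = {0..1} \<Longrightarrow> (AE \<omega> in M. finite {k. \<exists>t. Y t \<omega> \<in> A k})"
  shows "AE \<omega> in M. finite (vals \<omega>)"
proof (rule ccontr)
  assume nAE: "\<not> ?thesis"
  define \<Gamma>0 where "\<Gamma>0 = {\<omega>\<in>space M. infin UNIV \<omega>}"
  have \<Gamma>0s: "\<Gamma>0 \<in> sets M" unfolding \<Gamma>0_def by measurable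
  have "{\<omega>\<in>space M. \<not> finite (vals \<omega>)} = \<Gamma>0" unfolding \<Gamma>0_def infin_def by auto
  from AE_iff_measurable[OF \<Gamma>0s this] nAE have "emeasure M \<Gamma>0 \<noteq> 0" by simp
  then have "measure M \<Gamma>0 \<noteq> 0" by (simp add: emeasure_eq_measure)
  then have \<eta>pos: "0 < measure M \<Gamma>0" using measure_nonneg[of M \<Gamma>0] by linarith
  define \<eta> where "\<eta> = measure M \<Gamma>0"
  have \<eta>: "0 < \<eta>" "measure M (Gam \<eta> 0) = \<eta>" using \<eta>pos unfolding \<eta>_def Gam0 \<Gamma>0_def by auto
  define Z where "Z = (\<Inter>j. Gam \<eta> j)"
  have Gs_sets: "range (Gam \<eta>) \<subseteq> sets M" using inv[OF \<eta>(1)] by auto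
  have Zs: "Z \<in> sets M" unfolding Z_def using Gs_sets by auto
  have "(\<lambda>j. measure M (Gam \<eta> j)) \<longlonglongrightarrow> measure M Z"
    unfolding Z_def by (rule finite_Lim_measure_decseq[OF Gs_sets Gam_anti])
  then have "\<eta>/2 \<le> measure M Z"
  proof (rule LIMSEQ_le_const, intro exI[of _ 0] allI impI)
    fix n :: nat
    have "0 \<le> \<eta>/2^(n+1)" using \<eta>(1) by simp
    then show "\<eta>/2 \<le> measure M (Gam \<eta> n)" using Gam_measure[OF \<eta>, of n] by linarith
  qed
  then have Zpos: "0 < measure M Z" using \<eta>(1) by simp
  have Zsp: "Z \<subseteq> space M" using Zs sets.sets_into_space by auto
  define A where "A k = (case k of 0 \<Rightarrow> {0..1} - (\<Union>j. Gs \<eta> j) | Suc j \<Rightarrow> Gs \<eta> j \<inter> {0..1})" for k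
  have GB: "Gs \<eta> j \<in> sets borel" for j using Gs_props(1)[OF \<eta>(1)] .
  have A_sets: "\<forall>k. A k \<in> sets (restrict_space borel {0..1})"
  proof
    fix k
    show "A k \<in> sets (restrict_space borel {0..1})"
    proof (cases k)
      case 0
      have "A k = {0..1} \<inter> (- (\<Union>j. Gs \<eta> j))" unfolding A_def 0 by auto
      moreover have "- (\<Union>j. Gs \<eta> j) \<in> sets borel" using GB by auto
      ultimately show ?thesis unfolding sets_restrict_space by blast
    next
      case (Suc j)
      have "A k = {0..1} \<inter> Gs \<eta> j" unfolding A_def Suc by auto
      then show ?thesis unfolding sets_restrict_space using GB by blast
    qed
  qed
  have A_disj: "disjoint_family A"
    unfolding disjoint_family_on_def
  proof (intro ballI impI)
    fix a b :: nat assume "a \<noteq> b"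
    then show "A a \<inter> A b = {}"
    proof (cases a; cases b)
      fix i j assume "a = Suc i" "b = Suc j"
      then have "i \<noteq> j" using \<open>a \<noteq> b\<close> by simp
      then have "Gs \<eta> i \<inter> Gs \<eta> j = {}"
      proof (cases "i < j")
        case True then show ?thesis using Gs_disj[OF \<eta>(1)] by blast
      next
        case False
        then have "j < i" using \<open>i \<noteq> j\<close> by simp
        then have "Gs \<eta> j \<inter> Gs \<eta> i = {}" using Gs_disj[OF \<eta>(1)] by blast
        then show ?thesis by blast
      qed
      then show ?thesis unfolding A_def using \<open>a = Suc i\<close> \<open>b = Suc j\<close> by auto
    qed (auto simp: A_def)
  qed
  have A_Un: "(\<Union>k. A k) = {0..1}"
  proof
    show "(\<Union>k. A k) \<subseteq> {0..1}" unfolding A_def by (auto split: nat.splits)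
    show "{0..1} \<subseteq> (\<Union>k. A k)"
    proof
      fix x :: real assume x: "x \<in> {0..1}"
      show "x \<in> (\<Union>k. A k)"
      proof (cases "x \<in> (\<Union>j. Gs \<eta> j)")
        case True
        then obtain j where "x \<in> Gs \<eta> j" by blast
        then have "x \<in> A (Suc j)" using x unfolding A_def by simp
        then show ?thesis by blast
      next
        case False
        then have "x \<in> A 0" using x unfolding A_def by simp
        then show ?thesis by blast
      qed
    qed
  qed
  have ae: "AE \<omega> in M. finite {k. \<exists>t. Y t \<omega> \<in> A k}" using FMV[OF A_sets A_disj A_Un] .
  have aeZ: "AE \<omega> in M. \<omega> \<notin> Z"
    using ae
  proof (rule AE_mp, intro AE_I2 impI)
    fix \<omega> assume sp: "\<omega> \<in> space M" and fin: "finite {k. \<exists>t. Y t \<omega> \<in> A k}"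
    show "\<omega> \<notin> Z"
    proof
      assume "\<omega> \<in> Z"
      then have "\<forall>j. \<omega> \<in> Gam \<eta> (Suc j)" unfolding Z_def by blast
      then have "\<forall>j. hit (Gs \<eta> j) \<omega>" unfolding Gam_Suc by blast
      then have "range Suc \<subseteq> {k. \<exists>t. Y t \<omega> \<in> A k}"
        using Yrng[OF sp] unfolding hit_def A_def by auto
      then have "finite (range Suc)" using fin by (rule finite_subset)
      moreover have "infinite (range Suc)" by (rule range_inj_infinite) (rule inj_Suc)
      ultimately show False by contradiction
    qed
  qed
  have Zeq: "{\<omega>\<in>space M. \<not> \<omega> \<notin> Z} = Z" using Zsp by auto
  have "emeasure M Z = 0" using AE_iff_measurable[OF Zs Zeq] aeZ by simp
  then have "measure M Z = 0" by (simp add: emeasure_eq_measure)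
  with Zpos show False by simp
qed

lemma easy:
  assumes fs: "AE \<omega> in M. finite (vals \<omega>)" and disj: "disjoint_family (A::nat \<Rightarrow> real set)"
  shows "AE \<omega> in M. finite {k. \<exists>t. Y t \<omega> \<in> A k}"
  using fs
proof (rule AE_mp, intro AE_I2 impI)
  fix \<omega> assume fin: "finite (vals \<omega>)"
  have sub: "{k. \<exists>t. Y t \<omega> \<in> A k} \<subseteq> (\<Union>v\<in>vals \<omega>. {k. v \<in> A k})" unfolding vals_def by auto
  have fk: "finite {k. v \<in> A k}" for v
  proof (cases "\<exists>k. v \<in> A k")
    case True
    then obtain k where k: "v \<in> A k" by blast
    have "{k. v \<in> A k} \<subseteq> {k}" using disj k unfolding disjoint_family_on_def by blast
    then show ?thesis by (rule finite_subset) simp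
  qed simp
  have fU: "finite (\<Union>v\<in>vals \<omega>. {k. v \<in> A k})" using fin fk by (intro finite_UN_I)
  show "finite {k. \<exists>t. Y t \<omega> \<in> A k}" using finite_subset[OF sub fU] .
qed

end

lemma ex_ge1: "(\<exists>t\<ge>(1::nat). P t) \<longleftrightarrow> (\<exists>t. P (Suc t))"
proof
  assume "\<exists>t\<ge>1. P t"
  then obtain t where "1 \<le> t" "P t" by blast
  then show "\<exists>t. P (Suc t)" by (intro exI[of _ "t - 1"]) simp
next
  assume "\<exists>t. P (Suc t)"
  then obtain t where "P (Suc t)" by blast
  then show "\<exists>t\<ge>1. P t" by (intro exI[of _ "Suc t"]) simp
qed

theorem proposition6:
  fixes M :: "'a measure" and X :: "nat \<Rightarrow> 'a \<Rightarrow> real"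
  assumes "prob_space M"
    and "process_in (restrict_space borel {0..1}) M X"
  shows "FMV (restrict_space borel {0..1}) M X \<longleftrightarrow> FS M X"
proof -
  have Xm: "X t \<in> borel_measurable M \<and> (\<forall>\<omega>\<in>space M. X t \<omega> \<in> {0..1})" if "1 \<le> t" for t
    using assms(2) that unfolding process_in_def measurable_restrict_space2_iff by (auto simp: Pi_def)
  interpret P: proc M "\<lambda>t. X (Suc t)"
    unfolding proc_def proc_axioms_def using assms(1) Xm by auto
  have rS: "range Suc = {1::nat..}"
  proof
    show "range Suc \<subseteq> {1::nat..}" by auto
    show "{1::nat..} \<subseteq> range Suc"
    proof
      fix t :: nat assume "t \<in> {1..}"
      then have "t = Suc (t - 1)" by simp
      then show "t \<in> range Suc" by (rule range_eqI)
    qed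
  qed
  have vals_eq: "(\<lambda>t. X t \<omega>) ` {1..} = P.vals \<omega>" for \<omega>
    unfolding P.vals_def rS[symmetric] by (simp add: image_image)
  have hit_eq: "{k. \<exists>t\<ge>1. X t \<omega> \<in> A k} = {k. \<exists>t. X (Suc t) \<omega> \<in> A k}" for \<omega> and A :: "nat \<Rightarrow> real set"
    using ex_ge1[of "\<lambda>t. X t \<omega> \<in> A _"] by auto
  have sp: "space (restrict_space borel {0..1}) = {0..(1::real)}" by (simp add: space_restrict_space)
  show ?thesis
  proof
    assume F: "FMV (restrict_space borel {0..1}) M X"
    have "AE \<omega> in M. finite (P.vals \<omega>)"
    proof (rule P.hard)
      fix A :: "nat \<Rightarrow> real set"
      assume "\<forall>k. A k \<in> sets (restrict_space borel {0..1})" "disjoint_family A" "(\<Union>k. A k) = {0..1}"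
      then have "AE \<omega> in M. finite {k. \<exists>t\<ge>1. X t \<omega> \<in> A k}" using F unfolding FMV_def sp by blast
      then show "AE \<omega> in M. finite {k. \<exists>t. X (Suc t) \<omega> \<in> A k}" unfolding hit_eq .
    qed
    then show "FS M X" unfolding FS_def vals_eq .
  next
    assume "FS M X"
    then have fs: "AE \<omega> in M. finite (P.vals \<omega>)" unfolding FS_def vals_eq .
    show "FMV (restrict_space borel {0..1}) M X"
      unfolding FMV_def hit_eq using P.easy[OF fs] by blast
  qed
qed

end
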